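(* Let $d\in\{-1,-2,-3,-7,-11,-19,-43,-67,-163\}$ and let $R$ be the ring of algebraic integers of the imaginary quadratic number field $\mathbb{Q}[\sqrt d]$. If $A$ is a nonzero ideal of $R$, then there is a nonzero element $m\in R$ such that $P_A=\tau_m$. Moreover, there is a positive ordinary integer $n$ such that $P_{A\overline A}=\tau_n$, where $\overline A=\{\overline a: a\in A\}$ is the complex conjugate of $A$ and $A\overline A$ is the product ideal.
   Context: Here $P_H$ for a subset $H\subseteq R$ is the principal congruence on the multiplicative semigroup $R_{mult}$ of $R$: for $a\in R$, $H\dots a=\{(x,y)\in R\times R: xay\in H\}$ and $P_H=\{(a,b): H\dots a=H\dots b\}$. For $m\in R$, $\tau_m$ is the relation on $R$ given by $(a,b)\in\tau_m$ iff $\gcd(a,m)$ and $\gcd(b,m)$ are associates in $R$ (for these $d$, $R$ is a unique factorization domain, so gcds exist). *)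

theory Defs
  imports Complex_Main "HOL-Computational_Algebra.Polynomial"
begin

definition sqrt_d :: "int \<Rightarrow> complex" where
  "sqrt_d d = (if d \<ge> 0 then complex_of_real (sqrt (real_of_int d))
               else \<i> * complex_of_real (sqrt (real_of_int (- d))))"

definition quad_field :: "int \<Rightarrow> complex set" where
  "quad_field d = {of_rat a + of_rat b * sqrt_d d | a b. True}"

definition algebraic_integer :: "complex \<Rightarrow> bool" where
  "algebraic_integer z \<longleftrightarrow> (\<exists>p :: int poly. lead_coeff p = 1 \<and> poly (map_poly of_int p) z = 0)"

definition OK :: "int \<Rightarrow> complex set" where
  "OK d = {z \<in> quad_field d. algebraic_integer z}"

definition dvd_in :: "complex set \<Rightarrow> complex \<Rightarrow> complex \<Rightarrow> bool" where
  "dvd_in R a b \<longleftrightarrow> (\<exists>k\<in>R. b = a * k)"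

definition assoc_in :: "complex set \<Rightarrow> complex \<Rightarrow> complex \<Rightarrow> bool" where
  "assoc_in R a b \<longleftrightarrow> dvd_in R a b \<and> dvd_in R b a"

definition is_gcd_in :: "complex set \<Rightarrow> complex \<Rightarrow> complex \<Rightarrow> complex \<Rightarrow> bool" where
  "is_gcd_in R g a b \<longleftrightarrow> g \<in> R \<and> dvd_in R g a \<and> dvd_in R g b \<and>
     (\<forall>c\<in>R. dvd_in R c a \<and> dvd_in R c b \<longrightarrow> dvd_in R c g)"

definition tau :: "complex set \<Rightarrow> complex \<Rightarrow> (complex \<times> complex) set" where
  "tau R m = {(a, b). a \<in> R \<and> b \<in> R \<and>
     (\<exists>g h. is_gcd_in R g a m \<and> is_gcd_in R h b m \<and> assoc_in R g h)}"

text \<open>H..a and the principal congruence P_H of the multiplicative semigroup of R.\<close>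
definition ann_pairs :: "complex set \<Rightarrow> complex set \<Rightarrow> complex \<Rightarrow> (complex \<times> complex) set" where
  "ann_pairs R H a = {(x, y). x \<in> R \<and> y \<in> R \<and> x * a * y \<in> H}"

definition PH :: "complex set \<Rightarrow> complex set \<Rightarrow> (complex \<times> complex) set" where
  "PH R H = {(a, b). a \<in> R \<and> b \<in> R \<and> ann_pairs R H a = ann_pairs R H b}"

definition ideal_in :: "complex set \<Rightarrow> complex set \<Rightarrow> bool" where
  "ideal_in R I \<longleftrightarrow> I \<subseteq> R \<and> 0 \<in> I \<and> (\<forall>x\<in>I. \<forall>y\<in>I. x + y \<in> I) \<and>
     (\<forall>x\<in>I. - x \<in> I) \<and> (\<forall>r\<in>R. \<forall>x\<in>I. r * x \<in> I)"

definition ideal_prod :: "complex set \<Rightarrow> complex set \<Rightarrow> complex set \<Rightarrow> complex set" where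
  "ideal_prod R A B = \<Inter>{I. ideal_in R I \<and> {a * b | a b. a \<in> A \<and> b \<in> B} \<subseteq> I}"

end

theory Submission
  imports Defs
begin

lemma rat_poly_denom:
  fixes f :: "rat poly"
  shows "\<exists>A::nat. A > 0 \<and> (\<forall>i. of_nat A * coeff f i \<in> \<int>)"
proof -
  define A where "A = (\<Prod>i\<le>degree f. nat (snd (quotient_of (coeff f i))))"
  have pos: "snd (quotient_of x) > 0" for x by (rule quotient_of_denom_pos')
  have "A > 0" unfolding A_def using pos by (simp add: prod_pos)
  moreover have "of_nat A * coeff f i \<in> \<int>" for i
  proof (cases "i \<le> degree f")
    case True
    obtain a b where ab: "quotient_of (coeff f i) = (a, b)" by (cases "quotient_of (coeff f i)")
    have b: "b > 0" using pos[of "coeff f i"] ab by simp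
    have cf: "coeff f i = of_int a / of_int b" using quotient_of_div[OF ab] .
    have "nat (snd (quotient_of (coeff f i))) dvd A" unfolding A_def
      by (rule dvd_prodI) (use True in auto)
    then have "nat b dvd A" using ab by simp
    then obtain k where k: "A = nat b * k" by blast
    have "of_nat A * coeff f i = of_int (a * int k)"
      using b by (simp add: k cf field_simps)
    then show ?thesis by simp
  next
    case False then show ?thesis by (simp add: coeff_eq_0)
  qed
  ultimately show ?thesis by blast
qed

lemma primitive_scale:
  fixes f :: "rat poly"
  assumes "lead_coeff f = 1"
  obtains A :: nat and F :: "int poly" where "A > 0" "map_poly of_int F = smult (of_nat A) f"
     "content F = 1"
proof -
  define P where "P = (\<lambda>A::nat. A > 0 \<and> (\<forall>i. of_nat A * coeff f i \<in> \<int>))"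
  from rat_poly_denom[of f] have ex: "\<exists>A. P A" unfolding P_def .
  define A where "A = (LEAST A. P A)"
  have PA: "P A" unfolding A_def by (rule LeastI_ex[OF ex])
  have minA: "\<And>B. P B \<Longrightarrow> A \<le> B" unfolding A_def by (rule Least_le)
  have "\<forall>i. coeff (smult (of_nat A) f) i \<in> \<int>" using PA by (simp add: P_def)
  then obtain F where F: "smult (of_nat A) f = map_poly of_int F" using intpolyE by metis
  have f0: "f \<noteq> 0" using assms by auto
  have degF: "degree F = degree f"
    using F PA by (metis P_def degree_map_poly degree_smult_eq of_int_eq_0_iff of_nat_0_less_iff less_irrefl)
  have lcF: "of_int (lead_coeff F) = (of_nat A :: rat)"
  proof -
    have "of_int (lead_coeff F) = coeff (map_poly (of_int::int\<Rightarrow>rat) F) (degree f)"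
      by (simp add: coeff_map_poly degF)
    also have "\<dots> = of_nat A" using F[symmetric] assms by simp
    finally show ?thesis .
  qed
  have cF: "content F = 1"
  proof -
    define g where "g = content F"
    have g0: "g \<ge> 0" unfolding g_def
      by (metis normalize_content abs_ge_zero normalize_int_def) 
    have gd: "g dvd lead_coeff F" unfolding g_def by simp
    have "lead_coeff F = int A" using lcF by (metis of_int_eq_iff of_int_of_nat_eq)
    with gd have gA: "g dvd int A" by simp
    have gnz: "g \<noteq> 0" using PA gA unfolding P_def g_def
      by (metis F content_eq_zero_iff map_poly_0 of_nat_0_less_iff of_nat_eq_0_iff smult_eq_0_iff f0 less_irrefl)
    then have gpos: "g > 0" using g0 by simp
    obtain B where B: "int A = g * B" using gA by blast
    have Bpos: "B > 0" using B gpos PA unfolding P_def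
      by (metis of_nat_0_less_iff zero_less_mult_pos)
    have "P (nat B)"
    proof -
      have "of_nat (nat B) * coeff f i \<in> \<int>" for i
      proof -
        have "g dvd coeff F i" unfolding g_def by simp
        then obtain e where e: "coeff F i = g * e" by blast
        have "of_int (coeff F i) = of_nat A * coeff f i"
          using arg_cong[OF F[symmetric], of "\<lambda>p. coeff p i"] by (simp add: coeff_map_poly)
        then have "of_int g * of_int e = of_int g * (of_int B * coeff f i :: rat)"
          using B e by (metis mult.assoc of_int_mult of_int_of_nat_eq)
        then have "of_int B * coeff f i = (of_int e :: rat)" using gnz by simp
        then show ?thesis using Bpos by simp
      qed
      then show ?thesis unfolding P_def using Bpos by simp
    qed
    then have "A \<le> nat B" by (rule minA)
    then have "int A \<le> B" using Bpos by linarith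
    then have "g * B \<le> 1 * B" using B by simp
    then have "g \<le> 1" using Bpos by (simp only: mult_le_cancel_right)
    then show ?thesis using gpos g_def by simp
  qed
  show ?thesis using that[of A F] PA F cF unfolding P_def by simp
qed

lemma map_poly_of_int_inj:
  fixes p q :: "int poly"
  assumes "(map_poly of_int p :: rat poly) = map_poly of_int q"
  shows "p = q"
proof (rule poly_eqI)
  fix n
  have "coeff (map_poly of_int p :: rat poly) n = coeff (map_poly of_int q) n" using assms by simp
  then show "coeff p n = coeff q n" by (simp add: coeff_map_poly)
qed

lemma hom_sum:
  assumes "h 0 = 0" "\<And>x y. h (x+y) = h x + h y"
  shows "h (sum g S) = sum (\<lambda>i. h (g i)) S"
proof (induction S rule: infinite_finite_induct)
  case (insert x F) then show ?case by (simp add: assms)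
qed (auto simp: assms)

lemma map_poly_mult_hom:
  fixes h :: "'a::comm_semiring_1 \<Rightarrow> 'b::comm_semiring_1"
  assumes "h 0 = 0" "\<And>x y. h (x+y) = h x + h y" "\<And>x y. h (x*y) = h x * h y"
  shows "map_poly h (p*q) = map_poly h p * map_poly h q"
proof (rule poly_eqI)
  fix n
  show "coeff (map_poly h (p*q)) n = coeff (map_poly h p * map_poly h q) n"
    by (simp add: coeff_map_poly assms(1) coeff_mult hom_sum[where h=h, OF assms(1,2)] assms(3))
qed

lemma map_poly_add_hom:
  assumes "h 0 = 0" "\<And>x y. h (x+y) = h x + h y"
  shows "map_poly h (p+q) = map_poly h p + map_poly h q"
  by (rule poly_eqI) (simp add: coeff_map_poly assms)

lemma map_poly_of_int_mult:
  fixes p q :: "int poly"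
  shows "(map_poly of_int (p * q) :: 'a :: comm_ring_1 poly) = map_poly of_int p * map_poly of_int q"
  by (rule map_poly_mult_hom) auto


lemma content_monic:
  fixes p :: "int poly"
  assumes "lead_coeff p = 1"
  shows "content p = 1"
proof -
  have "content p dvd 1" using content_dvd_coeff[of p "degree p"] assms by simp
  then show ?thesis by (metis is_unit_content_iff)
qed

lemma gauss_monic:
  fixes p :: "int poly" and q h :: "rat poly"
  assumes eq: "map_poly of_int p = q * h" and q1: "lead_coeff q = 1" and h1: "lead_coeff h = 1"
  shows "\<forall>i. coeff q i \<in> \<int>"
proof -
  obtain A Q where A: "A > 0" "map_poly of_int Q = smult (of_nat A) q" "content Q = 1"
    using primitive_scale[OF q1] by blast
  obtain B H where B: "B > 0" "map_poly of_int H = smult (of_nat B) h" "content H = 1"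
    using primitive_scale[OF h1] by blast
  have "(map_poly of_int (Q * H) :: rat poly) = smult (of_nat (A*B)) (map_poly of_int p)"
    by (simp add: map_poly_of_int_mult A B eq mult_ac)
  also have "\<dots> = map_poly of_int (smult (int (A*B)) p)"
    by (rule poly_eqI) (simp add: coeff_map_poly)
  finally have "Q * H = smult (int (A*B)) p" by (rule map_poly_of_int_inj)
  then have "content (Q * H) = content (smult (int (A*B)) p)" by simp
  moreover have "lead_coeff p = 1"
  proof -
    have "lead_coeff (map_poly (of_int::int\<Rightarrow>rat) p) = 1" using eq q1 h1 by (simp add: lead_coeff_mult)
    then show ?thesis by (simp add: degree_map_poly coeff_map_poly)
  qed
  ultimately have "1 = int (A * B)" using A B
    by (simp add: content_mult content_monic)
  then have "A * B = 1" by linarith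
  then have "A = 1" by simp
  then have "q = map_poly of_int Q" using A by simp
  then show ?thesis by (simp add: coeff_map_poly)
qed

lemma sqrt_d_neg:
  assumes "d < 0"
  shows "sqrt_d d = \<i> * complex_of_real (sqrt (real_of_int (- d)))"
  using assms by (simp add: sqrt_d_def)

lemma sqrt_d_sq:
  assumes "d < 0"
  shows "sqrt_d d * sqrt_d d = of_int d"
proof -
  have "complex_of_real (sqrt (real_of_int (- d))) * complex_of_real (sqrt (real_of_int (- d))) = of_int (-d)"
    using assms by (simp flip: of_real_mult)
  then show ?thesis using assms unfolding sqrt_d_neg[OF assms]
    by (simp add: algebra_simps)
qed

lemma Im_sqrt_d: "d < 0 \<Longrightarrow> Im (sqrt_d d) = sqrt (real_of_int (- d))"
  by (simp add: sqrt_d_neg)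
lemma Re_sqrt_d: "d < 0 \<Longrightarrow> Re (sqrt_d d) = 0"
  by (simp add: sqrt_d_neg)
lemma Im_sqrt_d_pos: "d < 0 \<Longrightarrow> Im (sqrt_d d) > 0"
  by (simp add: Im_sqrt_d)

lemma complex_of_rat_real: "(of_rat x :: complex) = complex_of_real (of_rat x)"
  by (cases x) (simp add: of_rat_rat)

lemma map_poly_of_rat_mult: "map_poly (of_rat::rat\<Rightarrow>complex) (p*q) = map_poly of_rat p * map_poly of_rat q"
  by (rule map_poly_mult_hom) (auto simp: of_rat_add of_rat_mult)
lemma map_poly_of_rat_add: "map_poly (of_rat::rat\<Rightarrow>complex) (p+q) = map_poly of_rat p + map_poly of_rat q"
  by (rule map_poly_add_hom) (auto simp: of_rat_add)

lemma alg_quad: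
  assumes dneg: "d < 0" and sqf: "\<And>v::int. v > 0 \<Longrightarrow> v^2 dvd d \<Longrightarrow> v = 1"
    and zK: "z \<in> quad_field d" and zI: "algebraic_integer z"
  shows "\<exists>S U::int. z = (of_int S + of_int U * sqrt_d d) / 2 \<and> 4 dvd S^2 - d * U^2"
proof -
  obtain a b where z: "z = of_rat a + of_rat b * sqrt_d d" using zK unfolding quad_field_def by blast
  obtain p where p: "lead_coeff p = 1" "poly (map_poly of_int p) z = 0"
    using zI unfolding algebraic_integer_def by blast
  show ?thesis
  proof (cases "b = 0")
    case True
    have "algebraic_int z" using p by (auto simp: algebraic_int_altdef_ipoly)
    moreover have "z \<in> \<rat>" using True z by simp
    ultimately have "z \<in> \<int>" by (rule rational_algebraic_int_is_int)
    then obtain k where k: "z = of_int k" by (auto elim: Ints_cases)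
    show ?thesis
      by (rule exI[of _ "2*k"], rule exI[of _ 0]) (simp add: k)
  next
    case False
    define q :: "rat poly" where "q = [:a^2 - of_int d * b^2, -2*a, 1:]"
    define P :: "rat poly" where "P = map_poly of_int p"
    define h where "h = P div q"
    define r where "r = P mod q"
    have q0: "q \<noteq> 0" and dq: "degree q = 2" and lq: "lead_coeff q = 1" by (auto simp: q_def)
    have Pqr: "P = h * q + r" unfolding h_def r_def by simp
    have dr: "degree r < 2 \<or> r = 0" using degree_mod_less[OF q0, of P] dq r_def by auto
    have r_eq: "r = [:coeff r 0, coeff r 1:]"
    proof (rule poly_eqI)
      fix n
      show "coeff r n = coeff [:coeff r 0, coeff r 1:] n"
        using dr by (cases n) (auto simp: coeff_pCons coeff_eq_0 split: nat.split)
    qed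
    define ev where "ev = (\<lambda>f. poly (map_poly (of_rat::rat\<Rightarrow>complex) f) z)"
    have evP: "ev P = 0"
    proof -
      have "map_poly (of_rat::rat\<Rightarrow>complex) P = map_poly of_int p"
        unfolding P_def by (subst map_poly_map_poly) (auto simp: o_def)
      then show ?thesis using p unfolding ev_def by simp
    qed
    have evq: "ev q = 0"
    proof -
      have sq: "sqrt_d d * sqrt_d d = of_int d" by (rule sqrt_d_sq[OF dneg])
      have "ev q = (of_rat a + of_rat b * sqrt_d d)^2 - 2 * of_rat a * (of_rat a + of_rat b * sqrt_d d)
                   + (of_rat a ^ 2 - of_int d * of_rat b ^ 2)"
        unfolding ev_def q_def z by (simp add: map_poly_pCons of_rat_minus of_rat_diff of_rat_mult of_rat_power algebra_simps power2_eq_square)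
      also have "\<dots> = 0" by (simp add: power2_eq_square algebra_simps sq)
      finally show ?thesis .
    qed
    have "ev P = ev h * ev q + ev r"
      unfolding ev_def by (subst Pqr) (simp add: map_poly_of_rat_mult map_poly_of_rat_add)
    then have evr: "ev r = 0" using evP evq by simp
    then have r0: "of_rat (coeff r 0) + of_rat (coeff r 1) * z = 0"
      unfolding ev_def by (subst (asm) r_eq) (simp add: map_poly_pCons algebra_simps)
    then have "Im (of_rat (coeff r 0) + of_rat (coeff r 1) * z) = 0" by simp
    then have "of_rat (coeff r 1) * of_rat b * sqrt (real_of_int (-d)) = (0::real)"
      by (simp add: z Im_sqrt_d[OF dneg] Re_sqrt_d[OF dneg] complex_of_rat_real)
    then have "coeff r 1 = 0" using False dneg by simp
    with r0 have "coeff r 0 = 0" by simp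
    with \<open>coeff r 1 = 0\<close> have "r = 0" by (subst r_eq) simp
    then have Pq: "map_poly of_int p = q * h" using Pqr P_def by (simp add: mult.commute)
    have "lead_coeff (map_poly (of_int::int\<Rightarrow>rat) p) = 1" using p by (simp add: degree_map_poly coeff_map_poly)
    then have lh: "lead_coeff h = 1" using Pq lq by (simp add: lead_coeff_mult)
    have ints: "\<forall>i. coeff q i \<in> \<int>" by (rule gauss_monic[OF Pq lq lh])
    from ints have "coeff q 1 \<in> \<int>" by blast
    then obtain S where S0: "2*a = of_int S" unfolding q_def by (auto elim: Ints_cases)
    from ints have "coeff q 0 \<in> \<int>" by blast
    then obtain T where T: "a^2 - of_int d * b^2 = of_int T" unfolding q_def by (auto elim: Ints_cases)
    have aS: "a = of_int S / 2" using S0 by simp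
    obtain u v where uv: "quotient_of (2*b) = (u, v)" by (cases "quotient_of (2*b)")
    have v0: "v > 0" using quotient_of_denom_pos[OF uv] .
    have cop: "coprime u v" using quotient_of_coprime[OF uv] .
    have bu: "2*b = of_int u / of_int v" using quotient_of_div[OF uv] .
    have "of_int d * (2*b)^2 = (of_int (S^2 - 4*T) :: rat)" using T aS by (simp add: algebra_simps power2_eq_square)
    moreover have "(of_int u :: rat) = 2*b*of_int v" using bu v0 by (simp add: field_simps)
    ultimately have "of_int d * (of_int u)^2 = (of_int ((S^2 - 4*T) * v^2) :: rat)"
      by (metis (no_types, lifting) mult.assoc of_int_mult of_int_power power_mult_distrib)
    then have eqi: "d * u^2 = (S^2 - 4*T) * v^2" by (metis of_int_eq_iff of_int_mult of_int_power)
    then have "v^2 dvd d * u^2" by simp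
    moreover have "coprime (v^2) (u^2)" using cop by (simp add: coprime_commute)
    ultimately have "v^2 dvd d" using coprime_dvd_mult_left_iff by blast
    then have v1: "v = 1" using sqf v0 by blast
    then have bU: "2 * b = of_int u" using bu by simp
    have "S^2 - d * u^2 = 4 * T" using eqi v1 by simp
    then have "4 dvd S^2 - d * u^2" by simp
    moreover have "z = (of_int S + of_int u * sqrt_d d) / 2"
    proof -
      have "2 * of_rat a = (of_int S :: complex)" using arg_cong[OF S0, of "of_rat::rat\<Rightarrow>complex"]
        by (simp add: of_rat_mult)
      moreover have "2 * of_rat b = (of_int u :: complex)" using arg_cong[OF bU, of "of_rat::rat\<Rightarrow>complex"]
        by (simp add: of_rat_mult)
      ultimately show ?thesis using z by (simp add: field_simps)
    qed
    ultimately show ?thesis by blast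
  qed
qed

definition Zw :: "complex \<Rightarrow> complex set" where
  "Zw w = {of_int x + of_int y * w | x y. True}"

locale qr =
  fixes w :: complex and t n :: int
  assumes w2: "w * w = of_int t * w - of_int n"
    and cw: "cnj w = of_int t - w"
    and imw: "Im w \<noteq> 0"
    and disc: "t^2 < 4*n"
    and Ccond: "\<And>h f. 2 \<le> h \<Longrightarrow> h dvd f^2 + t*f + n \<Longrightarrow> 4*n - t^2 < 3*h^2"
begin

abbreviation "R \<equiv> Zw w"

lemma memR: "z \<in> R \<longleftrightarrow> (\<exists>x y. z = of_int x + of_int y * w)"
  unfolding Zw_def by blast

lemma coords_unique:
  assumes "of_int x + of_int y * w = (of_int x' + of_int y' * w :: complex)"
  shows "x = x' \<and> y = y'"
proof -
  have "Im (of_int x + of_int y * w) = Im (of_int x' + of_int y' * w :: complex)" using assms by simp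
  then have "of_int y * Im w = of_int y' * Im w" by simp
  then have yy: "y = y'" using imw by simp
  then show ?thesis using assms by simp
qed

lemma R_of_int [simp,intro]: "of_int k \<in> R"
  unfolding memR by (rule exI[of _ k], rule exI[of _ 0]) simp
lemma R_0 [simp,intro]: "0 \<in> R" using R_of_int[of 0] by simp
lemma R_1 [simp,intro]: "1 \<in> R" using R_of_int[of 1] by simp
lemma R_w [simp,intro]: "w \<in> R"
  unfolding memR by (rule exI[of _ 0], rule exI[of _ 1]) simp

lemma R_add [simp,intro]: "a \<in> R \<Longrightarrow> b \<in> R \<Longrightarrow> a + b \<in> R"
  unfolding memR by (elim exE, rule_tac x="_ + _" in exI, rule_tac x="_ + _" in exI) (simp add: algebra_simps)
lemma R_neg [simp,intro]: "a \<in> R \<Longrightarrow> - a \<in> R"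
  unfolding memR by (elim exE, rule_tac x="- _" in exI, rule_tac x="- _" in exI) (simp add: algebra_simps)
lemma R_diff [simp,intro]: "a \<in> R \<Longrightarrow> b \<in> R \<Longrightarrow> a - b \<in> R"
  using R_add[of a "-b"] R_neg[of b] by simp
lemma R_mult [simp,intro]: "a \<in> R \<Longrightarrow> b \<in> R \<Longrightarrow> a * b \<in> R"
proof -
  assume "a \<in> R" "b \<in> R"
  then obtain x y x' y' where a: "a = of_int x + of_int y * w" and b: "b = of_int x' + of_int y' * w"
    unfolding memR by blast
  have "a * b = of_int (x*x' - n*y*y') + of_int (x*y' + y*x' + t*y*y') * w"
  proof -
    have "a * b = of_int x * of_int x' + (of_int x * of_int y' + of_int y * of_int x') * w
                  + of_int y * of_int y' * (w*w)" unfolding a b by (simp add: algebra_simps)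
    also have "\<dots> = of_int (x*x' - n*y*y') + of_int (x*y' + y*x' + t*y*y') * w"
      unfolding w2 by (simp add: algebra_simps)
    finally show ?thesis .
  qed
  then show "a * b \<in> R" unfolding memR by blast
qed
lemma R_cnj [simp,intro]: "a \<in> R \<Longrightarrow> cnj a \<in> R"
proof -
  assume "a \<in> R"
  then obtain x y where a: "a = of_int x + of_int y * w" unfolding memR by blast
  have "cnj a = of_int (x + y*t) + of_int (-y) * w" unfolding a by (simp add: cw algebra_simps)
  then show ?thesis unfolding memR by blast
qed

definition nq :: "int \<Rightarrow> int \<Rightarrow> int" where "nq x y = x^2 + t*x*y + n*y^2"

lemma nq_4: "4 * nq x y = (2*x + t*y)^2 + (4*n - t^2) * y^2"
  unfolding nq_def by (simp add: algebra_simps power2_eq_square)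

lemma nq_nonneg: "nq x y \<ge> 0"
proof -
  have "(2*x + t*y)^2 + (4*n - t^2) * y^2 \<ge> 0" using disc by (simp add: zero_le_mult_iff)
  then show ?thesis using nq_4[of x y] by linarith
qed

lemma nq_pos: "(x, y) \<noteq> (0, 0) \<Longrightarrow> nq x y > 0"
proof -
  assume ne: "(x, y) \<noteq> (0, 0)"
  show ?thesis
  proof (cases "y = 0")
    case True then have "x \<noteq> 0" using ne by simp
    then show ?thesis using True by (simp add: nq_def)
  next
    case False
    then have "(4*n - t^2) * y^2 > 0" using disc by simp
    moreover have "(2*x + t*y)^2 \<ge> 0" by simp
    ultimately show ?thesis using nq_4[of x y] by linarith
  qed
qed

lemma norm_coords: "(of_int x + of_int y * w) * cnj (of_int x + of_int y * w) = of_int (nq x y)"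
proof -
  have "(of_int x + of_int y * w) * cnj (of_int x + of_int y * w) =
        of_int x * of_int x + of_int t * of_int x * of_int y + of_int y * of_int y * (of_int t * w - w * w)"
    by (simp add: cw algebra_simps)
  also have "\<dots> = of_int (nq x y)" by (simp add: w2 nq_def power2_eq_square)
  finally show ?thesis .
qed

definition nr :: "complex \<Rightarrow> real" where "nr z = (cmod z)^2"

lemma nr_coords: "nr (of_int x + of_int y * w) = of_int (nq x y)"
proof -
  have "complex_of_real (nr (of_int x + of_int y * w)) = complex_of_real (of_int (nq x y))"
    unfolding nr_def complex_norm_square norm_coords by simp
  then show ?thesis using of_real_eq_iff by blast
qed

lemma nr_mult: "nr (a * b) = nr a * nr b"
  unfolding nr_def by (simp add: norm_mult power_mult_distrib)

lemma nr_cnj: "nr (cnj a) = nr a"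
  unfolding nr_def by simp

lemma nr_zero_iff: "nr a = 0 \<longleftrightarrow> a = 0"
  unfolding nr_def by simp

lemma nr_nat: "a \<in> R \<Longrightarrow> \<exists>k::nat. nr a = real k"
proof -
  assume "a \<in> R"
  then obtain x y where a: "a = of_int x + of_int y * w" unfolding memR by blast
  show ?thesis using nr_coords[of x y] nq_nonneg[of x y] unfolding a
    by (metis of_int_of_nat_eq nonneg_int_cases of_real_of_int_eq of_int_of_nat_eq)
qed

end

context qr begin

lemma ideal_facts:
  assumes "ideal_in R I"
  shows "I \<subseteq> R" "0 \<in> I" "\<And>a b. a \<in> I \<Longrightarrow> b \<in> I \<Longrightarrow> a + b \<in> I"
    "\<And>a. a \<in> I \<Longrightarrow> - a \<in> I" "\<And>r a. r \<in> R \<Longrightarrow> a \<in> I \<Longrightarrow> r * a \<in> I"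
    "\<And>a b. a \<in> I \<Longrightarrow> b \<in> I \<Longrightarrow> a - b \<in> I"
    "\<And>k a. a \<in> I \<Longrightarrow> of_int k * a \<in> I"
  using assms unfolding ideal_in_def
  by (auto, metis diff_conv_add_uminus) 

lemma lattice_L:
  assumes I: "ideal_in R I" and c: "c \<ge> 1" and cI: "of_int c \<in> I"
    and g0I: "\<gamma>0 \<in> I" and out: "\<forall>r\<in>R. \<gamma>0 \<noteq> of_int c * r"
  shows "\<exists>\<gamma>\<in>I. \<gamma> \<noteq> 0 \<and> nr \<gamma> < of_int (c^2)"
proof -
  note IF = ideal_facts[OF I]
  show ?thesis
  proof (cases "\<exists>e. of_int e \<in> I \<and> \<not> c dvd e")
    case True
    then obtain e where e: "of_int e \<in> I" "\<not> c dvd e" by blast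
    have "of_int (e mod c) = of_int e - of_int (e div c) * (of_int c :: complex)"
      by (metis minus_div_mult_eq_mod of_int_diff of_int_mult)
    then have inI: "of_int (e mod c) \<in> I" using IF(6)[OF e(1) IF(7)[OF cI]] by simp
    have m0: "e mod c \<noteq> 0" using e(2) by (simp add: dvd_eq_mod_eq_0)
    have m1: "e mod c \<ge> 0" "e mod c < c" using c by auto
    have "nr (of_int (e mod c)) = of_int (nq (e mod c) 0)" using nr_coords[of "e mod c" 0] by simp
    also have "nq (e mod c) 0 = (e mod c)^2" by (simp add: nq_def)
    finally have "nr (of_int (e mod c)) = of_int ((e mod c)^2)" .
    moreover have "(e mod c)^2 < c^2" using m1 by (simp add: power_strict_mono)
    then have "real_of_int ((e mod c)^2) < real_of_int (c^2)" by (simp only: of_int_less_iff)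
    ultimately show ?thesis using inI m0
      by (intro bexI[of _ "of_int (e mod c)"]) auto
  next
    case False
    then have intI: "\<And>e. of_int e \<in> I \<Longrightarrow> c dvd e" by blast
    define G where "G = {y. \<exists>x. of_int x + of_int y * w \<in> I}"
    have Gadd: "y1 + y2 \<in> G" if yy: "y1 \<in> G" "y2 \<in> G" for y1 y2
    proof -
      obtain x1 x2 where "of_int x1 + of_int y1 * w \<in> I" "of_int x2 + of_int y2 * w \<in> I"
        using yy unfolding G_def by blast
      from IF(3)[OF this] have "of_int (x1+x2) + of_int (y1+y2) * w \<in> I" by (simp add: algebra_simps)
      then show ?thesis unfolding G_def by blast
    qed
    have Gmul: "k * y \<in> G" if yy: "y \<in> G" for k y
    proof -
      obtain x where "of_int x + of_int y * w \<in> I" using yy unfolding G_def by blast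
      from IF(7)[OF this, of k] have "of_int (k*x) + of_int (k*y) * w \<in> I" by (simp add: algebra_simps)
      then show ?thesis unfolding G_def by blast
    qed
    have cG: "c \<in> G"
    proof -
      have "w * of_int c \<in> I" using IF(5)[OF R_w cI] .
      then have "of_int 0 + of_int c * w \<in> I" by (simp add: mult.commute)
      then show ?thesis unfolding G_def by blast
    qed
    define P where "P = (\<lambda>g::nat. 0 < g \<and> int g \<in> G)"
    have Pc: "P (nat c)" using c cG unfolding P_def by simp
    define g where "g = (LEAST g. P g)"
    have Pg: "P g" unfolding g_def by (rule LeastI[of P, OF Pc])
    have gmin: "\<And>k. P k \<Longrightarrow> g \<le> k" unfolding g_def by (rule Least_le[of P])
    have gpos: "int g > 0" using Pg unfolding P_def by simp
    have gdvd: "int g dvd y" if "y \<in> G" for y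
    proof (rule ccontr)
      assume nd: "\<not> int g dvd y"
      have "y + (- (y div int g)) * int g \<in> G" using Gadd[OF \<open>y \<in> G\<close> Gmul] Pg unfolding P_def by blast
      moreover have "y + (- (y div int g)) * int g = y mod int g" by (simp add: minus_div_mult_eq_mod[symmetric])
      ultimately have "y mod int g \<in> G" by simp
      moreover have ypos: "y mod int g > 0" using nd gpos
        by (metis dvd_eq_mod_eq_0 less_le pos_mod_sign)
      ultimately have "P (nat (y mod int g))" unfolding P_def by simp
      then have "g \<le> nat (y mod int g)" by (rule gmin)
      then have "int g \<le> y mod int g" using ypos by (simp add: le_nat_iff)
      moreover have "y mod int g < int g" using gpos by simp
      ultimately show False by linarith
    qed
    obtain x0 where x0: "of_int x0 + of_int (int g) * w \<in> I" using Pg unfolding P_def G_def by blast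
    have eqw: "w * (of_int x0 + of_int (int g) * w) = of_int (- int g * n) + of_int (x0 + int g * t) * w"
    proof -
      have "w * (of_int x0 + of_int (int g) * w) = of_int x0 * w + of_int (int g) * (w * w)"
        by (simp add: algebra_simps)
      also have "\<dots> = of_int (- int g * n) + of_int (x0 + int g * t) * w" unfolding w2 by (simp add: algebra_simps)
      finally show ?thesis .
    qed
    have "of_int (- int g * n) + of_int (x0 + int g * t) * w \<in> I"
      using IF(5)[OF R_w x0] unfolding eqw .
    then have "x0 + int g * t \<in> G" unfolding G_def by blast
    then have "int g dvd x0 + int g * t" by (rule gdvd)
    then have "int g dvd x0" by (simp add: dvd_add_left_iff)
    then obtain f where f: "x0 = int g * f" by blast
    define e1 where "e1 = of_int (int g * f) + of_int (int g) * w"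
    have e1I: "e1 \<in> I" using x0 f unfolding e1_def by simp
    have "w * e1 - of_int (f + t) * e1 = of_int (- (int g * nq f 1))"
    proof -
      have "w * e1 - of_int (f + t) * e1 = of_int (int g) * (w * w) - of_int (int g) * of_int t * w
          - of_int (int g) * (of_int f * of_int f + of_int f * of_int t)"
        unfolding e1_def by (simp add: algebra_simps)
      also have "\<dots> = of_int (- (int g * nq f 1))" unfolding w2 by (simp add: algebra_simps nq_def power2_eq_square)
      finally show ?thesis .
    qed
    moreover have "w * e1 - of_int (f + t) * e1 \<in> I" using IF(6)[OF IF(5)[OF R_w e1I] IF(7)[OF e1I]] .
    ultimately have "c dvd - (int g * nq f 1)" using intI by metis
    then have cdv: "c dvd int g * nq f 1" by simp
    have "int g dvd c" using gdvd[OF cG] .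
    then obtain h where h: "c = int g * h" by blast
    have hpos: "h > 0" using h c gpos zero_less_mult_pos[of "int g" h] by simp
    have h1: "h \<noteq> 1"
    proof
      assume "h = 1"
      then have gc: "int g = c" using h by simp
      obtain x y where xy: "\<gamma>0 = of_int x + of_int y * w" using g0I IF(1) memR by blast
      have "y \<in> G" using g0I xy unfolding G_def by blast
      then have "c dvd y" using gdvd gc by simp
      then obtain y1 where y1: "y = c * y1" by blast
      have "\<gamma>0 - of_int y1 * e1 = of_int (x - y1 * c * f)"
        unfolding xy e1_def y1 gc by (simp add: algebra_simps)
      moreover have "\<gamma>0 - of_int y1 * e1 \<in> I" using IF(6)[OF g0I IF(7)[OF e1I]] .
      ultimately have "c dvd x - y1 * c * f" using intI by metis
      then have "c dvd (x - y1*c*f) + y1*c*f" by (intro dvd_add) auto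
      then have "c dvd x" by simp
      then obtain x1 where x1: "x = c * x1" by blast
      have "\<gamma>0 = of_int c * (of_int x1 + of_int y1 * w)" unfolding xy x1 y1 by (simp add: algebra_simps)
      moreover have "of_int x1 + of_int y1 * w \<in> R" unfolding memR by blast
      ultimately show False using out by blast
    qed
    have h2: "h \<ge> 2" using hpos h1 by simp
    have hdv: "h dvd nq f 1" using cdv h gpos by simp
    define u where "u = 2*f + t"
    define j where "j = (u + h) div (2*h)"
    define f' where "f' = f - h * j"
    have "u + h = (2*h)*j + (u+h) mod (2*h)" unfolding j_def by (metis div_mult_mod_eq mult.commute)
    then have md: "(u + h) mod (2*h) = u + h - 2*h*j" by linarith
    have b1: "0 \<le> (u + h) mod (2*h)" "(u + h) mod (2*h) < 2*h" using hpos by auto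
    have vdef: "2*f' + t = (u + h) mod (2*h) - h" using md unfolding f'_def u_def by (simp add: algebra_simps)
    have vb: "- h \<le> 2*f' + t" "2*f' + t \<le> h" using b1 vdef by linarith+
    have vsq: "(2*f' + t)^2 \<le> h^2"
    proof -
      have "0 \<le> (h - (2*f'+t)) * (h + (2*f'+t))" using vb by (intro mult_nonneg_nonneg) linarith+
      then show ?thesis by (simp add: algebra_simps power2_eq_square)
    qed
    have "nq f' 1 = nq f 1 + h * (- j * (f' + f + t))" unfolding nq_def f'_def by (simp add: algebra_simps power2_eq_square)
    then have hdv': "h dvd nq f' 1" using hdv by simp
    then have "4*n - t^2 < 3*h^2" using Ccond[OF h2] by (simp add: nq_def)
    moreover have "4 * nq f' 1 = (2*f' + t)^2 + (4*n - t^2)" using nq_4[of f' 1] by simp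
    ultimately have "4 * nq f' 1 < 4 * h^2" using vsq by linarith
    then have nql: "nq f' 1 < h^2" by simp
    define e2 where "e2 = of_int (int g * f') + of_int (int g) * w"
    have "e2 = e1 - of_int j * of_int c" unfolding e2_def e1_def f'_def h by (simp add: algebra_simps)
    then have e2I: "e2 \<in> I" using IF(6)[OF e1I IF(7)[OF cI]] by simp
    have "nq (int g * f') (int g) = (int g)^2 * nq f' 1" unfolding nq_def by (simp add: algebra_simps power2_eq_square)
    also have "\<dots> < (int g)^2 * h^2" using nql gpos by simp
    also have "\<dots> = c^2" unfolding h by (simp add: power_mult_distrib)
    finally have "nr e2 < of_int (c^2)" unfolding e2_def nr_coords by simp
    moreover have "e2 \<noteq> 0"
    proof
      assume "e2 = 0"
      then have "of_int (int g * f') + of_int (int g) * w = of_int 0 + of_int 0 * w" unfolding e2_def by simp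
      then have "int g = 0" using coords_unique by blast
      then show False using gpos by simp
    qed
    ultimately show ?thesis using e2I by blast
  qed
qed

end

context qr begin

lemma pid_R:
  assumes A: "ideal_in R A"
  shows "\<exists>\<beta>\<in>R. A = (\<lambda>r. \<beta> * r) ` R"
proof (cases "A \<subseteq> {0}")
  case True
  then have "A = {0}" using ideal_facts(2)[OF A] by blast
  moreover have "(\<lambda>r. 0 * r) ` R = {0}" using R_0 by auto
  ultimately show ?thesis using R_0 by metis
next
  case False
  note IF = ideal_facts[OF A]
  then obtain a where a: "a \<in> A" "a \<noteq> 0" using False by blast
  define S where "S = {k::nat. \<exists>\<beta>\<in>A. \<beta> \<noteq> 0 \<and> nr \<beta> = real k}"
  obtain ka where "nr a = real ka" using nr_nat IF(1) a(1) by blast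
  then have kaS: "ka \<in> S" using a unfolding S_def by blast
  define k0 where "k0 = (LEAST k. k \<in> S)"
  have k0S: "k0 \<in> S" unfolding k0_def by (rule LeastI[of "\<lambda>k. k \<in> S", OF kaS])
  have k0min: "\<And>k. k \<in> S \<Longrightarrow> k0 \<le> k" unfolding k0_def by (rule Least_le[of "\<lambda>k. k \<in> S"])
  obtain \<beta> where \<beta>: "\<beta> \<in> A" "\<beta> \<noteq> 0" "nr \<beta> = real k0" using k0S unfolding S_def by blast
  have \<beta>R: "\<beta> \<in> R" using \<beta>(1) IF(1) by blast
  define c where "c = int k0"
  have cb: "of_int c = cnj \<beta> * \<beta>"
  proof -
    have "complex_of_real (nr \<beta>) = \<beta> * cnj \<beta>" unfolding nr_def by (rule complex_norm_square)
    then show ?thesis using \<beta>(3) unfolding c_def by (simp add: mult.commute)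
  qed
  have c1: "c \<ge> 1" using \<beta>(2,3) nr_zero_iff unfolding c_def by (cases k0) auto
  have "A = (\<lambda>r. \<beta> * r) ` R"
  proof
    show "(\<lambda>r. \<beta> * r) ` R \<subseteq> A" using IF(5)[OF _ \<beta>(1)] by (auto simp: mult.commute)
  next
    show "A \<subseteq> (\<lambda>r. \<beta> * r) ` R"
    proof
      fix \<alpha> assume \<alpha>: "\<alpha> \<in> A"
      show "\<alpha> \<in> (\<lambda>r. \<beta> * r) ` R"
      proof (rule ccontr)
        assume nin: "\<alpha> \<notin> (\<lambda>r. \<beta> * r) ` R"
        have \<alpha>R: "\<alpha> \<in> R" using \<alpha> IF(1) by blast
        define J where "J = {cnj \<beta> * (s * \<alpha> + u * \<beta>) | s u. s \<in> R \<and> u \<in> R}"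
        have J: "ideal_in R J" unfolding ideal_in_def
        proof (intro conjI ballI)
          show "J \<subseteq> R" unfolding J_def using \<alpha>R \<beta>R by auto
          show "0 \<in> J" unfolding J_def by (rule CollectI, rule exI[of _ 0], rule exI[of _ 0]) simp
          fix x y assume "x \<in> J" "y \<in> J"
          then obtain s1 u1 s2 u2 where "x = cnj \<beta> * (s1 * \<alpha> + u1 * \<beta>)" "s1 \<in> R" "u1 \<in> R"
             "y = cnj \<beta> * (s2 * \<alpha> + u2 * \<beta>)" "s2 \<in> R" "u2 \<in> R" unfolding J_def by blast
          then show "x + y \<in> J" unfolding J_def
            by (intro CollectI exI[of _ "s1+s2"] exI[of _ "u1+u2"]) (simp add: algebra_simps)
        next
          fix x assume "x \<in> J"
          then obtain s1 u1 where "x = cnj \<beta> * (s1 * \<alpha> + u1 * \<beta>)" "s1 \<in> R" "u1 \<in> R" unfolding J_def by blast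
          then show "- x \<in> J" unfolding J_def
            by (intro CollectI exI[of _ "-s1"] exI[of _ "-u1"]) (simp add: algebra_simps)
        next
          fix r x assume "r \<in> R" "x \<in> J"
          then obtain s1 u1 where "x = cnj \<beta> * (s1 * \<alpha> + u1 * \<beta>)" "s1 \<in> R" "u1 \<in> R" unfolding J_def by blast
          then show "r * x \<in> J" unfolding J_def using \<open>r \<in> R\<close>
            by (intro CollectI exI[of _ "r*s1"] exI[of _ "r*u1"]) (simp add: algebra_simps)
        qed
        have cJ: "of_int c \<in> J" unfolding J_def cb
          by (intro CollectI exI[of _ 0] exI[of _ 1]) simp
        have gJ: "cnj \<beta> * \<alpha> \<in> J" unfolding J_def
          by (intro CollectI exI[of _ 1] exI[of _ 0]) simp
        have out: "\<forall>r\<in>R. cnj \<beta> * \<alpha> \<noteq> of_int c * r"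
        proof (intro ballI notI)
          fix r assume r: "r \<in> R" "cnj \<beta> * \<alpha> = of_int c * r"
          then have "cnj \<beta> * \<alpha> = cnj \<beta> * (\<beta> * r)" unfolding cb by (simp add: algebra_simps)
          then have "\<alpha> = \<beta> * r" using \<beta>(2) by simp
          then show False using nin r(1) by blast
        qed
        obtain \<gamma> where \<gamma>: "\<gamma> \<in> J" "\<gamma> \<noteq> 0" "nr \<gamma> < of_int (c^2)"
          using lattice_L[OF J c1 cJ gJ out] by blast
        then obtain s u where su: "\<gamma> = cnj \<beta> * (s * \<alpha> + u * \<beta>)" "s \<in> R" "u \<in> R" unfolding J_def by blast
        define \<delta> where "\<delta> = s * \<alpha> + u * \<beta>"
        have \<delta>A: "\<delta> \<in> A" unfolding \<delta>_def using IF(3)[OF IF(5)[OF su(2) \<alpha>] IF(5)[OF su(3) \<beta>(1)]] .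
        have \<delta>0: "\<delta> \<noteq> 0" using \<gamma>(2) su(1) unfolding \<delta>_def by simp
        obtain k where k: "nr \<delta> = real k" using nr_nat \<delta>A IF(1) by blast
        then have "k \<in> S" using \<delta>A \<delta>0 unfolding S_def by blast
        then have "k0 \<le> k" by (rule k0min)
        have "nr \<gamma> = nr \<beta> * nr \<delta>" unfolding su(1) \<delta>_def[symmetric] by (simp add: nr_mult nr_cnj)
        also have "\<dots> = real k0 * real k" using \<beta>(3) k by simp
        also have "\<dots> \<ge> real k0 * real k0" using \<open>k0 \<le> k\<close> by (simp add: mult_left_mono)
        finally have "nr \<gamma> \<ge> real k0 * real k0" .
        moreover have "of_int (c^2) = real k0 * real k0" unfolding c_def by (simp add: power2_eq_square)
        ultimately show False using \<gamma>(3) by linarith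
      qed
    qed
  qed
  then show ?thesis using \<beta>R by blast
qed

end

definition subring :: "complex set \<Rightarrow> bool" where
  "subring R \<longleftrightarrow> 0 \<in> R \<and> 1 \<in> R \<and> (\<forall>a\<in>R. \<forall>b\<in>R. a + b \<in> R \<and> a * b \<in> R \<and> - a \<in> R)"

definition is_pid :: "complex set \<Rightarrow> bool" where
  "is_pid R \<longleftrightarrow> (\<forall>A. ideal_in R A \<longrightarrow> (\<exists>\<beta>\<in>R. A = (\<lambda>r. \<beta> * r) ` R))"

lemma dvd_in_trans: "subring R \<Longrightarrow> dvd_in R a b \<Longrightarrow> dvd_in R b c \<Longrightarrow> dvd_in R a c"
  unfolding dvd_in_def subring_def by (metis mult.assoc)

lemma dvd_in_refl: "subring R \<Longrightarrow> dvd_in R a a"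
  unfolding dvd_in_def subring_def by (metis mult_1_right)

lemma assoc_in_trans: "subring R \<Longrightarrow> assoc_in R a b \<Longrightarrow> assoc_in R b c \<Longrightarrow> assoc_in R a c"
  unfolding assoc_in_def using dvd_in_trans by blast

lemma assoc_in_sym: "assoc_in R a b \<Longrightarrow> assoc_in R b a"
  unfolding assoc_in_def by blast

lemma gcd_unique: "is_gcd_in R g a m \<Longrightarrow> is_gcd_in R g' a m \<Longrightarrow> assoc_in R g g'"
  unfolding is_gcd_in_def assoc_in_def by blast

lemma ann_char:
  assumes R: "subring R" and P: "is_pid R" and m: "m \<in> R" "m \<noteq> 0" and a: "a \<in> R"
  shows "\<exists>g m'. is_gcd_in R g a m \<and> m' \<in> R \<and> m = g * m' \<and>
     ann_pairs R ((\<lambda>r. m * r) ` R) a = {(x, y). x \<in> R \<and> y \<in> R \<and> dvd_in R m' (x * y)}"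
proof -
  have R0: "0 \<in> R" and R1: "1 \<in> R" and Radd: "\<And>x y. x \<in> R \<Longrightarrow> y \<in> R \<Longrightarrow> x + y \<in> R"
    and Rmul: "\<And>x y. x \<in> R \<Longrightarrow> y \<in> R \<Longrightarrow> x * y \<in> R" and Rneg: "\<And>x. x \<in> R \<Longrightarrow> - x \<in> R"
    using R unfolding subring_def by auto
  define K where "K = {a * s + m * u | s u. s \<in> R \<and> u \<in> R}"
  have K: "ideal_in R K" unfolding ideal_in_def
  proof (intro conjI ballI)
    show "K \<subseteq> R" unfolding K_def using a m Radd Rmul by auto
    show "0 \<in> K" unfolding K_def using R0 by (intro CollectI exI[of _ 0]) auto
    fix x y assume "x \<in> K" "y \<in> K"
    then obtain s1 u1 s2 u2 where "x = a * s1 + m * u1" "s1 \<in> R" "u1 \<in> R"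
       "y = a * s2 + m * u2" "s2 \<in> R" "u2 \<in> R" unfolding K_def by blast
    then show "x + y \<in> K" unfolding K_def using Radd
      by (intro CollectI exI[of _ "s1+s2"] exI[of _ "u1+u2"]) (simp add: algebra_simps)
  next
    fix x assume "x \<in> K"
    then obtain s1 u1 where "x = a * s1 + m * u1" "s1 \<in> R" "u1 \<in> R" unfolding K_def by blast
    then show "- x \<in> K" unfolding K_def using Rneg
      by (intro CollectI exI[of _ "-s1"] exI[of _ "-u1"]) (simp add: algebra_simps)
  next
    fix r x assume "r \<in> R" "x \<in> K"
    then obtain s1 u1 where "x = a * s1 + m * u1" "s1 \<in> R" "u1 \<in> R" unfolding K_def by blast
    then show "r * x \<in> K" unfolding K_def using \<open>r \<in> R\<close> Rmul
      by (intro CollectI exI[of _ "r*s1"] exI[of _ "r*u1"]) (simp add: algebra_simps)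
  qed
  obtain g where g: "g \<in> R" "K = (\<lambda>r. g * r) ` R" using P K unfolding is_pid_def by blast
  have "a \<in> K" unfolding K_def using R0 R1 by (intro CollectI exI[of _ 1] exI[of _ 0]) simp
  then obtain a' where a': "a' \<in> R" "a = g * a'" using g by blast
  have "m \<in> K" unfolding K_def using R0 R1 by (intro CollectI exI[of _ 0] exI[of _ 1]) simp
  then obtain m' where m': "m' \<in> R" "m = g * m'" using g by blast
  have "g \<in> K" using g R1 by (metis image_eqI mult_1_right)
  then obtain s0 u0 where su: "g = a * s0 + m * u0" "s0 \<in> R" "u0 \<in> R" unfolding K_def by blast
  have g0: "g \<noteq> 0" using m m' by auto
  have one: "1 = a' * s0 + m' * u0"
  proof -
    have "g * 1 = g * (a' * s0 + m' * u0)" using su(1) a'(2) m'(2) by (simp add: algebra_simps)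
    then show ?thesis using g0 by simp
  qed
  have gcd: "is_gcd_in R g a m" unfolding is_gcd_in_def
  proof (intro conjI ballI impI)
    show "g \<in> R" by fact
    show "dvd_in R g a" unfolding dvd_in_def using a' by blast
    show "dvd_in R g m" unfolding dvd_in_def using m' by blast
    fix c assume c: "c \<in> R" "dvd_in R c a \<and> dvd_in R c m"
    then obtain k1 k2 where "k1 \<in> R" "a = c * k1" "k2 \<in> R" "m = c * k2" unfolding dvd_in_def by blast
    then have "g = c * (k1 * s0 + k2 * u0)" "k1 * s0 + k2 * u0 \<in> R"
      using su Rmul Radd by (auto simp: algebra_simps)
    then show "dvd_in R c g" unfolding dvd_in_def by blast
  qed
  have pw: "((x, y) \<in> ann_pairs R ((\<lambda>r. m * r) ` R) a) \<longleftrightarrow> (x \<in> R \<and> y \<in> R \<and> dvd_in R m' (x * y))" for x y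
  proof -
    show "((x, y) \<in> ann_pairs R ((\<lambda>r. m * r) ` R) a) \<longleftrightarrow> (x \<in> R \<and> y \<in> R \<and> dvd_in R m' (x * y))"
    proof
      assume "(x, y) \<in> ann_pairs R ((\<lambda>r. m * r) ` R) a"
      then obtain r where xy: "x \<in> R" "y \<in> R" "r \<in> R" "x * a * y = m * r" unfolding ann_pairs_def by auto
      then have "g * (x * a' * y) = g * (m' * r)" using a'(2) m'(2) by (simp add: algebra_simps)
      then have e: "x * a' * y = m' * r" using g0 by simp
      have "x * y = x * y * (a' * s0 + m' * u0)" using one by simp
      also have "\<dots> = m' * (r * s0 + x * y * u0)" using e by (simp add: algebra_simps)
      finally have "x * y = m' * (r * s0 + x * y * u0)" .
      moreover have "r * s0 + x * y * u0 \<in> R" using xy su Rmul Radd by auto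
      ultimately show "x \<in> R \<and> y \<in> R \<and> dvd_in R m' (x * y)" using xy unfolding dvd_in_def by blast
    next
      assume "x \<in> R \<and> y \<in> R \<and> dvd_in R m' (x * y)"
      then obtain k where xy: "x \<in> R" "y \<in> R" "k \<in> R" "x * y = m' * k" unfolding dvd_in_def by blast
      have "x * a * y = m * (a' * k)" using xy(4) a'(2) m'(2) by (simp add: algebra_simps)
      moreover have "a' * k \<in> R" using a' xy Rmul by auto
      ultimately show "(x, y) \<in> ann_pairs R ((\<lambda>r. m * r) ` R) a" unfolding ann_pairs_def using xy by auto
    qed
  qed
  have ann: "ann_pairs R ((\<lambda>r. m * r) ` R) a = {(x, y). x \<in> R \<and> y \<in> R \<and> dvd_in R m' (x * y)}"
    by (simp add: set_eq_iff split_paired_All pw)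
  show ?thesis using gcd m' ann by blast
qed

lemma PH_tau:
  assumes R: "subring R" and P: "is_pid R" and m: "m \<in> R" "m \<noteq> 0"
  shows "PH R ((\<lambda>r. m * r) ` R) = tau R m"
proof (rule set_eqI, clarify)
  fix a b
  have R1: "1 \<in> R" and Rmul: "\<And>x y. x \<in> R \<Longrightarrow> y \<in> R \<Longrightarrow> x * y \<in> R"
    using R unfolding subring_def by auto
  show "(a, b) \<in> PH R ((\<lambda>r. m * r) ` R) \<longleftrightarrow> (a, b) \<in> tau R m"
  proof (cases "a \<in> R \<and> b \<in> R")
    case False then show ?thesis unfolding PH_def tau_def by auto
  next
    case True
    obtain ga ma where A: "is_gcd_in R ga a m" "ma \<in> R" "m = ga * ma"
      "ann_pairs R ((\<lambda>r. m * r) ` R) a = {(x, y). x \<in> R \<and> y \<in> R \<and> dvd_in R ma (x * y)}"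
      using ann_char[OF R P m] True by blast
    obtain gb mb where B: "is_gcd_in R gb b m" "mb \<in> R" "m = gb * mb"
      "ann_pairs R ((\<lambda>r. m * r) ` R) b = {(x, y). x \<in> R \<and> y \<in> R \<and> dvd_in R mb (x * y)}"
      using ann_char[OF R P m] True by blast
    have ma0: "ma \<noteq> 0" and mb0: "mb \<noteq> 0" and ga0: "ga \<noteq> 0" and gb0: "gb \<noteq> 0" using A(3) B(3) m(2) by auto
    have gaR: "ga \<in> R" and gbR: "gb \<in> R" using A(1) B(1) unfolding is_gcd_in_def by auto
    have key: "assoc_in R ga gb \<longleftrightarrow> assoc_in R ma mb"
    proof -
      have 1: "dvd_in R ga gb \<longleftrightarrow> dvd_in R mb ma"
      proof
        assume "dvd_in R ga gb"
        then obtain k where k: "k \<in> R" "gb = ga * k" unfolding dvd_in_def by blast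
        then have "ga * ma = ga * (k * mb)" using A(3) B(3) by (metis mult.assoc mult.commute)
        then have "ma = mb * k" using ga0 by (auto simp: ac_simps)
        then show "dvd_in R mb ma" unfolding dvd_in_def using k by blast
      next
        assume "dvd_in R mb ma"
        then obtain k where k: "k \<in> R" "ma = mb * k" unfolding dvd_in_def by blast
        then have "mb * gb = mb * (ga * k)" using A(3) B(3) by (metis mult.assoc mult.commute)
        then have "gb = ga * k" using mb0 by (auto simp: ac_simps)
        then show "dvd_in R ga gb" unfolding dvd_in_def using k by blast
      qed
      have 2: "dvd_in R gb ga \<longleftrightarrow> dvd_in R ma mb"
      proof
        assume "dvd_in R gb ga"
        then obtain k where k: "k \<in> R" "ga = gb * k" unfolding dvd_in_def by blast
        then have "gb * mb = gb * (k * ma)" using A(3) B(3) by (metis mult.assoc mult.commute)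
        then have "mb = ma * k" using gb0 by (auto simp: ac_simps)
        then show "dvd_in R ma mb" unfolding dvd_in_def using k by blast
      next
        assume "dvd_in R ma mb"
        then obtain k where k: "k \<in> R" "mb = ma * k" unfolding dvd_in_def by blast
        then have "ma * ga = ma * (gb * k)" using A(3) B(3) by (metis mult.assoc mult.commute)
        then have "ga = gb * k" using ma0 by (auto simp: ac_simps)
        then show "dvd_in R gb ga" unfolding dvd_in_def using k by blast
      qed
      show ?thesis unfolding assoc_in_def using 1 2 by blast
    qed
    have PHiff: "(a, b) \<in> PH R ((\<lambda>r. m * r) ` R) \<longleftrightarrow> assoc_in R ma mb"
    proof
      assume "(a, b) \<in> PH R ((\<lambda>r. m * r) ` R)"
      then have eq: "{(x, y). x \<in> R \<and> y \<in> R \<and> dvd_in R ma (x * y)} = {(x, y). x \<in> R \<and> y \<in> R \<and> dvd_in R mb (x * y)}"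
        unfolding PH_def using A(4) B(4) by auto
      have "(1, ma) \<in> {(x, y). x \<in> R \<and> y \<in> R \<and> dvd_in R ma (x * y)}" using R1 A(2) dvd_in_refl[OF R] by simp
      then have d1: "dvd_in R mb ma" using eq by auto
      have "(1, mb) \<in> {(x, y). x \<in> R \<and> y \<in> R \<and> dvd_in R mb (x * y)}" using R1 B(2) dvd_in_refl[OF R] by simp
      then have "(1, mb) \<in> {(x, y). x \<in> R \<and> y \<in> R \<and> dvd_in R ma (x * y)}" using eq by simp
      then have d2: "dvd_in R ma mb" by simp
      show "assoc_in R ma mb" unfolding assoc_in_def using d1 d2 by blast
    next
      assume as: "assoc_in R ma mb"
      have "{(x, y). x \<in> R \<and> y \<in> R \<and> dvd_in R ma (x * y)} = {(x, y). x \<in> R \<and> y \<in> R \<and> dvd_in R mb (x * y)}"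
        using as dvd_in_trans[OF R] unfolding assoc_in_def by blast
      then show "(a, b) \<in> PH R ((\<lambda>r. m * r) ` R)" unfolding PH_def using A(4) B(4) True by auto
    qed
    have TAUiff: "(a, b) \<in> tau R m \<longleftrightarrow> assoc_in R ga gb"
    proof
      assume "(a, b) \<in> tau R m"
      then obtain g h where gh: "is_gcd_in R g a m" "is_gcd_in R h b m" "assoc_in R g h"
        unfolding tau_def by auto
      have "assoc_in R ga g" by (rule gcd_unique[OF A(1) gh(1)])
      moreover have "assoc_in R h gb" by (rule gcd_unique[OF gh(2) B(1)])
      ultimately show "assoc_in R ga gb" using gh(3) assoc_in_trans[OF R] by blast
    next
      assume "assoc_in R ga gb"
      then show "(a, b) \<in> tau R m" unfolding tau_def using A(1) B(1) True by blast
    qed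
    show ?thesis using PHiff TAUiff key by simp
  qed
qed

lemma ideal_prod_principal:
  assumes R: "subring R" and m: "m \<in> R" and m': "m' \<in> R"
  shows "ideal_prod R ((\<lambda>r. m * r) ` R) ((\<lambda>r. m' * r) ` R) = (\<lambda>r. (m * m') * r) ` R"
proof -
  have R1: "1 \<in> R" and Rmul: "\<And>x y. x \<in> R \<Longrightarrow> y \<in> R \<Longrightarrow> x * y \<in> R"
    and Radd: "\<And>x y. x \<in> R \<Longrightarrow> y \<in> R \<Longrightarrow> x + y \<in> R" and Rneg: "\<And>x. x \<in> R \<Longrightarrow> - x \<in> R"
    and R0: "0 \<in> R"
    using R unfolding subring_def by auto
  define M where "M = (\<lambda>r. (m * m') * r) ` R"
  have MI: "ideal_in R M" unfolding ideal_in_def M_def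
  proof (intro conjI ballI)
    show "(\<lambda>r. m * m' * r) ` R \<subseteq> R" using m m' Rmul by auto
    show "0 \<in> (\<lambda>r. m * m' * r) ` R" using R0 by (metis image_eqI mult_zero_right)
    fix x y assume "x \<in> (\<lambda>r. m * m' * r) ` R" "y \<in> (\<lambda>r. m * m' * r) ` R"
    then obtain r1 r2 where "r1 \<in> R" "r2 \<in> R" "x = m * m' * r1" "y = m * m' * r2" by blast
    then show "x + y \<in> (\<lambda>r. m * m' * r) ` R" using Radd
      by (metis (no_types, lifting) distrib_left image_eqI)
  next
    fix x assume "x \<in> (\<lambda>r. m * m' * r) ` R"
    then obtain r1 where "r1 \<in> R" "x = m * m' * r1" by blast
    then show "- x \<in> (\<lambda>r. m * m' * r) ` R" using Rneg
      by (metis (no_types, lifting) mult_minus_right image_eqI)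
  next
    fix r x assume "r \<in> R" "x \<in> (\<lambda>r. m * m' * r) ` R"
    then obtain r1 where "r1 \<in> R" "x = m * m' * r1" by blast
    then show "r * x \<in> (\<lambda>r. m * m' * r) ` R" using Rmul \<open>r \<in> R\<close>
      by (intro image_eqI[of _ _ "r * r1"]) (auto simp: algebra_simps)
  qed
  have prods: "{a * b | a b. a \<in> (\<lambda>r. m * r) ` R \<and> b \<in> (\<lambda>r. m' * r) ` R} \<subseteq> M"
  proof
    fix z assume "z \<in> {a * b | a b. a \<in> (\<lambda>r. m * r) ` R \<and> b \<in> (\<lambda>r. m' * r) ` R}"
    then obtain r1 r2 where "r1 \<in> R" "r2 \<in> R" "z = (m * r1) * (m' * r2)" by blast
    then show "z \<in> M" unfolding M_def using Rmul
      by (intro image_eqI[of _ _ "r1 * r2"]) (auto simp: algebra_simps)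
  qed
  have "ideal_prod R ((\<lambda>r. m * r) ` R) ((\<lambda>r. m' * r) ` R) \<subseteq> M"
    unfolding ideal_prod_def using MI prods by blast
  moreover have "M \<subseteq> I" if I: "ideal_in R I" "{a * b | a b. a \<in> (\<lambda>r. m * r) ` R \<and> b \<in> (\<lambda>r. m' * r) ` R} \<subseteq> I" for I
  proof
    fix z assume "z \<in> M"
    then obtain r where r: "r \<in> R" "z = m * m' * r" unfolding M_def by blast
    have "m * 1 \<in> (\<lambda>r. m * r) ` R" "m' * 1 \<in> (\<lambda>r. m' * r) ` R" using R1 by blast+
    then have "m * m' \<in> I" using I(2) by force
    then have "r * (m * m') \<in> I" using I(1) r(1) unfolding ideal_in_def by blast
    then show "z \<in> I" using r by (simp add: mult.commute)
  qed
  then have "M \<subseteq> ideal_prod R ((\<lambda>r. m * r) ` R) ((\<lambda>r. m' * r) ` R)"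
    unfolding ideal_prod_def by blast
  ultimately show ?thesis unfolding M_def by blast
qed

context qr begin

lemma subring_R: "subring R"
  unfolding subring_def by auto

lemma is_pid_R: "is_pid R"
  unfolding is_pid_def using pid_R by blast

lemma R_alg_int: "z \<in> R \<Longrightarrow> algebraic_integer z"
proof -
  assume "z \<in> R"
  then obtain x y where z: "z = of_int x + of_int y * w" unfolding memR by blast
  have tr: "z + cnj z = of_int (2*x + t*y)" unfolding z by (simp add: cw algebra_simps)
  have nm: "z * cnj z = of_int (nq x y)" unfolding z by (rule norm_coords)
  define p :: "int poly" where "p = [:nq x y, -(2*x + t*y), 1:]"
  have "lead_coeff p = 1" unfolding p_def by simp
  moreover have "poly (map_poly of_int p) z = z * cnj z - (z + cnj z) * z + z * z"
    unfolding p_def tr nm by (simp add: map_poly_pCons algebra_simps)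
  moreover have "z * cnj z - (z + cnj z) * z + z * z = 0" by (simp add: algebra_simps)
  ultimately show ?thesis unfolding algebraic_integer_def by metis
qed

lemma cnj_image_R: "cnj ` R = R"
proof
  show "cnj ` R \<subseteq> R" by auto
  show "R \<subseteq> cnj ` R"
  proof
    fix z assume "z \<in> R"
    then have "cnj z \<in> R" by simp
    then show "z \<in> cnj ` R" by (metis complex_cnj_cnj image_eqI)
  qed
qed

lemma main_qr:
  assumes OK: "OK d = R" and A: "ideal_in (OK d) A" and A0: "A \<noteq> {0}"
  shows "(\<exists>m\<in>OK d. m \<noteq> 0 \<and> PH (OK d) A = tau (OK d) m) \<and>
         (\<exists>n::int. n > 0 \<and>
            PH (OK d) (ideal_prod (OK d) A (cnj ` A)) = tau (OK d) (of_int n))"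
proof -
  obtain \<beta> where \<beta>: "\<beta> \<in> R" "A = (\<lambda>r. \<beta> * r) ` R" using pid_R A unfolding OK by blast
  have \<beta>0: "\<beta> \<noteq> 0"
  proof
    assume "\<beta> = 0"
    then have "A = {0}" using \<beta>(2) R_0 by auto
    then show False using A0 by simp
  qed
  have part1: "PH R A = tau R \<beta>" unfolding \<beta>(2) by (rule PH_tau[OF subring_R is_pid_R \<beta>(1) \<beta>0])
  have cA: "cnj ` A = (\<lambda>r. cnj \<beta> * r) ` R"
  proof -
    have "cnj ` A = (\<lambda>r. cnj \<beta> * r) ` (cnj ` R)" unfolding \<beta>(2) image_image by simp
    then show ?thesis unfolding cnj_image_R .
  qed
  have prod: "ideal_prod R A (cnj ` A) = (\<lambda>r. (\<beta> * cnj \<beta>) * r) ` R"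
    unfolding cA by (subst \<beta>(2), rule ideal_prod_principal[OF subring_R \<beta>(1) R_cnj[OF \<beta>(1)]])
  obtain x y where xy: "\<beta> = of_int x + of_int y * w" using \<beta>(1) memR by blast
  have "(x, y) \<noteq> (0, 0)" using \<beta>0 xy by auto
  then have npos: "nq x y > 0" by (rule nq_pos)
  have bn: "\<beta> * cnj \<beta> = of_int (nq x y)" unfolding xy by (rule norm_coords)
  have part2: "PH R (ideal_prod R A (cnj ` A)) = tau R (of_int (nq x y))"
    unfolding prod bn by (rule PH_tau[OF subring_R is_pid_R]) (use npos in auto)
  show ?thesis unfolding OK using part1 part2 \<beta>(1) \<beta>0 npos by blast
qed

end

lemma bound_h: fixes h :: int assumes "2 \<le> h" "3*h^2 \<le> B" "B \<le> 3*(M+1)^2 - 1" "0 \<le> M" shows "h \<le> M"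
proof (rule ccontr)
  assume "\<not> h \<le> M"
  then have "M + 1 \<le> h" by simp
  then have "(M+1)^2 \<le> h^2" using assms(4) by (simp add: power_mono)
  then show False using assms(2,3) by linarith
qed

lemma sq_mod4: "(x::int)^2 mod 4 = (if even x then 0 else 1)"
proof (cases "even x")
  case True
  then obtain c where "x = 2*c" by blast
  then show ?thesis using True by (simp add: power2_eq_square)
next
  case False
  then obtain c where c: "x = 2*c + 1" using oddE by blast
  have e: "x^2 = 1 + (c^2 + c) * 4" unfolding c by (simp add: algebra_simps power2_eq_square)
  have "x^2 mod 4 = 1 mod 4" unfolding e by (rule mod_mult_self1)
  then show ?thesis using False by simp
qed

lemma sqrt_d_cnj: "d < 0 \<Longrightarrow> cnj (sqrt_d d) = - sqrt_d d"
  by (simp add: sqrt_d_neg)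

lemma Ccond1:
  fixes k h f :: int
  assumes chk: "\<And>h r. 2 \<le> h \<Longrightarrow> 3*h^2 \<le> 4*k - 1 \<Longrightarrow> 0 \<le> r \<Longrightarrow> r < h \<Longrightarrow> \<not> h dvd r^2 + r + k"
    and h: "2 \<le> h" and dv: "h dvd f^2 + 1*f + k"
  shows "4*k - 1^2 < 3*h^2"
proof (rule ccontr)
  assume "\<not> 4*k - 1^2 < 3*h^2"
  then have le: "3*h^2 \<le> 4*k - 1" by simp
  define r where "r = f mod h"
  define q where "q = f div h"
  have f: "f = h*q + r" unfolding r_def q_def by simp
  have "f^2 + 1*f + k = (r^2 + r + k) + h * (2*q*r + h*q^2 + q)" unfolding f by (simp add: algebra_simps power2_eq_square)
  then have "h dvd r^2 + r + k" using dv by (metis dvd_add_left_iff dvd_triv_left)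
  moreover have "0 \<le> r" "r < h" using h unfolding r_def by auto
  ultimately show False using chk[OF h le] by blast
qed

lemma qr1:
  assumes d0: "d < 0" and d4: "d mod 4 = 1"
    and chk: "\<And>h r. 2 \<le> h \<Longrightarrow> 3*h^2 \<le> -d \<Longrightarrow> 0 \<le> r \<Longrightarrow> r < h \<Longrightarrow> \<not> h dvd r^2 + r + (1-d) div 4"
  shows "qr ((1 + sqrt_d d)/2) 1 ((1-d) div 4)"
proof -
  define k where "k = (1-d) div 4"
  have dk: "d = 1 - 4*k" unfolding k_def using d4 by (metis minus_mod_eq_mult_div [symmetric] mult.commute
     diff_diff_eq2 diff_add_cancel add_diff_cancel_left' mod_diff_left_eq mod_self minus_diff_eq
     diff_zero dvd_eq_mod_eq_0 dvd_minus_mod)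
  have sq: "sqrt_d d * sqrt_d d = of_int d" by (rule sqrt_d_sq[OF d0])
  have dk': "(of_int d :: complex) = 1 - 4 * of_int k" unfolding dk by simp
  show ?thesis
  proof (unfold_locales, fold k_def)
    show "(1 + sqrt_d d) / 2 * ((1 + sqrt_d d) / 2) = of_int 1 * ((1 + sqrt_d d) / 2) - of_int k"
    proof -
      have "(1 + sqrt_d d) / 2 * ((1 + sqrt_d d) / 2) = (1 + 2 * sqrt_d d + sqrt_d d * sqrt_d d) / 4"
        by (simp add: field_simps power2_eq_square)
      also have "\<dots> = of_int 1 * ((1 + sqrt_d d) / 2) - of_int k" unfolding sq dk' by (simp add: field_simps)
      finally show ?thesis .
    qed
    show "cnj ((1 + sqrt_d d) / 2) = of_int 1 - (1 + sqrt_d d) / 2"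
      using sqrt_d_cnj[OF d0] by (simp add: field_simps)
    show "Im ((1 + sqrt_d d) / 2) \<noteq> 0" using Im_sqrt_d_pos[OF d0] by simp
    show "1^2 < 4*k" using dk d0 by simp
    fix h f :: int assume "2 \<le> h" "h dvd f^2 + 1*f + k"
    then show "4*k - 1^2 < 3*h^2" using Ccond1[of k h f] chk unfolding k_def[symmetric] dk by simp
  qed
qed

lemma OK1:
  assumes d0: "d < 0" and d4: "d mod 4 = 1"
    and chk: "\<And>h r. 2 \<le> h \<Longrightarrow> 3*h^2 \<le> -d \<Longrightarrow> 0 \<le> r \<Longrightarrow> r < h \<Longrightarrow> \<not> h dvd r^2 + r + (1-d) div 4"
    and sqf: "\<And>v::int. v > 0 \<Longrightarrow> v^2 dvd d \<Longrightarrow> v = 1"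
  shows "OK d = Zw ((1 + sqrt_d d)/2)"
proof -
  interpret qr "(1 + sqrt_d d)/2" 1 "(1-d) div 4" by (rule qr1[OF d0 d4 chk])
  define k where "k = (1-d) div 4"
  have dk: "d = 1 - 4*k" unfolding k_def using d4 by (metis minus_mod_eq_mult_div [symmetric] mult.commute
     diff_diff_eq2 diff_add_cancel add_diff_cancel_left' mod_diff_left_eq mod_self minus_diff_eq
     diff_zero dvd_eq_mod_eq_0 dvd_minus_mod)
  show ?thesis
  proof
    show "OK d \<subseteq> R"
    proof
      fix z assume "z \<in> OK d"
      then have zK: "z \<in> quad_field d" and zI: "algebraic_integer z" unfolding OK_def by auto
      obtain S U where SU: "z = (of_int S + of_int U * sqrt_d d) / 2" "4 dvd S^2 - d * U^2"
        using alg_quad[OF d0 sqf zK zI] by blast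
      have "S^2 - d * U^2 = (S^2 - U^2) + 4 * (k * U^2)" unfolding dk by (simp add: algebra_simps)
      then have "4 dvd S^2 - U^2" using SU(2) by (metis dvd_add_left_iff dvd_triv_left)
      then have "S^2 mod 4 = U^2 mod 4" by (metis mod_eq_dvd_iff)
      then have "even S \<longleftrightarrow> even U" unfolding sq_mod4 by (auto split: if_splits)
      then have "even (S - U)" by simp
      then obtain x where x: "S - U = 2 * x" by blast
      have "z = of_int x + of_int U * ((1 + sqrt_d d)/2)"
      proof -
        have "of_int S = (2 * of_int x + of_int U :: complex)" using x by (metis eq_diff_eq of_int_add of_int_mult of_int_numeral)
        then show ?thesis unfolding SU(1) by (simp add: field_simps)
      qed
      then show "z \<in> R" unfolding memR by blast
    qed
    show "R \<subseteq> OK d"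
    proof
      fix z assume zR: "z \<in> R"
      then obtain x y where z: "z = of_int x + of_int y * ((1 + sqrt_d d)/2)" unfolding memR by blast
      have r1: "of_rat (of_int x + of_int y / 2) = (of_int x + of_int y / 2 :: complex)"
        by (simp add: of_rat_add of_rat_divide)
      have r2: "of_rat (of_int y / 2) = (of_int y / 2 :: complex)"
        by (simp add: of_rat_divide)
      have "z = of_rat (of_int x + of_int y / 2) + of_rat (of_int y / 2) * sqrt_d d"
        unfolding z r1 r2 by (simp add: field_simps)
      then have "z \<in> quad_field d" unfolding quad_field_def by blast
      then show "z \<in> OK d" unfolding OK_def using R_alg_int[OF zR] by blast
    qed
  qed
qed

lemma qr2:
  assumes d0: "d < 0" and d2: "d \<ge> -2"
  shows "qr (sqrt_d d) 0 (-d)"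
proof
  show "sqrt_d d * sqrt_d d = of_int 0 * sqrt_d d - of_int (- d)" using sqrt_d_sq[OF d0] by simp
  show "cnj (sqrt_d d) = of_int 0 - sqrt_d d" using sqrt_d_cnj[OF d0] by simp
  show "Im (sqrt_d d) \<noteq> 0" using Im_sqrt_d_pos[OF d0] by simp
  show "0^2 < 4 * - d" using d0 by simp
  fix h f :: int assume "2 \<le> h"
  then have "4 \<le> h^2" using power_mono[of 2 h 2] by simp
  then show "4 * - d - 0^2 < 3*h^2" using d2 by simp
qed

lemma OK2:
  assumes dd: "d = -1 \<or> d = -2"
  shows "OK d = Zw (sqrt_d d)"
proof -
  have d0: "d < 0" and d2: "d \<ge> -2" using dd by auto
  interpret qr "sqrt_d d" 0 "-d" by (rule qr2[OF d0 d2])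
  have sqf: "\<And>v::int. v > 0 \<Longrightarrow> v^2 dvd d \<Longrightarrow> v = 1"
  proof -
    fix v :: int assume v: "v > 0" "v^2 dvd d"
    then have "\<bar>v^2\<bar> \<le> \<bar>d\<bar>" using d0 by (intro dvd_imp_le_int) auto
    then have "v^2 \<le> 2" using dd by auto
    have "v < 2"
    proof (rule ccontr)
      assume "\<not> v < 2"
      then have "2^2 \<le> v^2" by (intro power_mono) auto
      then show False using \<open>v^2 \<le> 2\<close> by simp
    qed
    then show "v = 1" using v(1) by simp
  qed
  show ?thesis
  proof
    show "OK d \<subseteq> R"
    proof
      fix z assume "z \<in> OK d"
      then have zK: "z \<in> quad_field d" and zI: "algebraic_integer z" unfolding OK_def by auto
      obtain S U where SU: "z = (of_int S + of_int U * sqrt_d d) / 2" "4 dvd S^2 - d * U^2"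
        using alg_quad[OF d0 sqf zK zI] by blast
      have m: "(S^2 - d * U^2) mod 4 = 0" using SU(2) by simp
      have ev: "even S \<and> even U"
      proof (cases "d = -1")
        case True
        then have "(S^2 mod 4 + U^2 mod 4) mod 4 = 0" using m by (simp add: mod_add_eq)
        then show ?thesis unfolding sq_mod4 by (auto split: if_splits)
      next
        case False
        then have "d = -2" using dd by simp
        moreover have "(S^2 mod 4 + 2 * (U^2 mod 4)) mod 4 = (S^2 + 2 * U^2) mod 4"
        proof -
          have "(S^2 mod 4 + 2 * (U^2 mod 4)) mod 4 = (S^2 + 2 * (U^2 mod 4)) mod 4"
            by (rule mod_add_left_eq)
          also have "\<dots> = (S^2 + (2 * (U^2 mod 4)) mod 4) mod 4"
            by (rule mod_add_right_eq[symmetric])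
          also have "(2 * (U^2 mod 4)) mod 4 = (2 * U^2) mod 4"
            by (rule mod_mult_right_eq)
          also have "(S^2 + (2 * U^2) mod 4) mod 4 = (S^2 + 2 * U^2) mod 4"
            by (rule mod_add_right_eq)
          finally show ?thesis .
        qed
        ultimately have "(S^2 mod 4 + 2 * (U^2 mod 4)) mod 4 = 0" using m by simp
        then show ?thesis unfolding sq_mod4 by (auto split: if_splits)
      qed
      then obtain x y where "S = 2*x" "U = 2*y" by blast
      then have "z = of_int x + of_int y * sqrt_d d" unfolding SU(1) by simp
      then show "z \<in> R" unfolding memR by blast
    qed
    show "R \<subseteq> OK d"
    proof
      fix z assume zR: "z \<in> R"
      then obtain x y where z: "z = of_int x + of_int y * sqrt_d d" unfolding memR by blast
      have "z = of_rat (of_int x) + of_rat (of_int y) * sqrt_d d" unfolding z by simp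
      then have "z \<in> quad_field d" unfolding quad_field_def by blast
      then show "z \<in> OK d" unfolding OK_def using R_alg_int[OF zR] by blast
    qed
  qed
qed

lemma sqf_gen:
  fixes d M :: int
  assumes d0: "d < 0" and small: "\<And>v. 1 \<le> v \<Longrightarrow> v \<le> M \<Longrightarrow> v^2 dvd d \<Longrightarrow> v = 1"
    and bd: "- d < (M+1)^2" and M0: "0 \<le> M"
  shows "\<And>v::int. v > 0 \<Longrightarrow> v^2 dvd d \<Longrightarrow> v = 1"
proof -
  fix v :: int assume v: "v > 0" "v^2 dvd d"
  then have "\<bar>v^2\<bar> \<le> \<bar>d\<bar>" using d0 by (intro dvd_imp_le_int) auto
  then have le: "v^2 \<le> - d" using d0 by simp
  have "v \<le> M"
  proof (rule ccontr)
    assume "\<not> v \<le> M"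
    then have "(M+1)^2 \<le> v^2" using M0 by (intro power_mono) auto
    then show False using le bd by linarith
  qed
  then show "v = 1" using small v by simp
qed

lemma case1:
  assumes d0: "d < 0" and d4: "d mod 4 = 1"
    and chk: "\<And>h r. 2 \<le> h \<Longrightarrow> 3*h^2 \<le> -d \<Longrightarrow> 0 \<le> r \<Longrightarrow> r < h \<Longrightarrow> \<not> h dvd r^2 + r + (1-d) div 4"
    and sqf: "\<And>v::int. v > 0 \<Longrightarrow> v^2 dvd d \<Longrightarrow> v = 1"
    and A: "ideal_in (OK d) A" and A0: "A \<noteq> {0}"
  shows "(\<exists>m\<in>OK d. m \<noteq> 0 \<and> PH (OK d) A = tau (OK d) m) \<and>
         (\<exists>n::int. n > 0 \<and>
            PH (OK d) (ideal_prod (OK d) A (cnj ` A)) = tau (OK d) (of_int n))"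
proof -
  interpret qr "(1 + sqrt_d d)/2" 1 "(1-d) div 4" by (rule qr1[OF d0 d4 chk])
  show ?thesis by (rule main_qr[OF OK1[OF d0 d4 chk sqf] A A0])
qed

lemma case2:
  assumes dd: "d = -1 \<or> d = -2"
    and A: "ideal_in (OK d) A" and A0: "A \<noteq> {0}"
  shows "(\<exists>m\<in>OK d. m \<noteq> 0 \<and> PH (OK d) A = tau (OK d) m) \<and>
         (\<exists>n::int. n > 0 \<and>
            PH (OK d) (ideal_prod (OK d) A (cnj ` A)) = tau (OK d) (of_int n))"
proof -
  have d0: "d < 0" and d2: "d \<ge> -2" using dd by auto
  interpret qr "sqrt_d d" 0 "-d" by (rule qr2[OF d0 d2])
  show ?thesis by (rule main_qr[OF OK2[OF dd] A A0])
qed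

lemma sq4: "2 \<le> (h::int) \<Longrightarrow> 4 \<le> h^2"
  using power_mono[of 2 h 2] by simp

lemma chk_small:
  fixes h r :: int
  assumes "2 \<le> h" "3*h^2 \<le> B" "B < 12"
  shows "\<not> h dvd r^2 + r + k"
proof -
  have "2^2 \<le> h^2" using assms(1) by (intro power_mono) auto
  then show ?thesis using assms by simp
qed

lemma chk19: fixes h r :: int assumes "2 \<le> h" "3*h^2 \<le> 19" "0 \<le> r" "r < h"
  shows "\<not> h dvd r^2 + r + 5"
proof -
  have "h \<le> 2" using bound_h[OF assms(1,2)] by simp
  then have "h = 2" using assms(1) by auto
  moreover have "r \<in> {0,1}" using assms \<open>h = 2\<close> by auto
  ultimately show ?thesis by (auto simp: power2_eq_square)
qed

lemma chk43: fixes h r :: int assumes "2 \<le> h" "3*h^2 \<le> 43" "0 \<le> r" "r < h"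
  shows "\<not> h dvd r^2 + r + 11"
proof -
  have "h \<le> 3" using bound_h[OF assms(1,2)] by simp
  then have "h \<in> {2,3}" using assms(1) by auto
  moreover have "r \<le> 2" using assms \<open>h \<le> 3\<close> by simp
  then have "r \<in> {0,1,2}" using assms(3) by auto
  ultimately show ?thesis using assms(4) by (auto simp: power2_eq_square)
qed

lemma chk67: fixes h r :: int assumes "2 \<le> h" "3*h^2 \<le> 67" "0 \<le> r" "r < h"
  shows "\<not> h dvd r^2 + r + 17"
proof -
  have "h \<le> 4" using bound_h[OF assms(1,2)] by simp
  then have "h \<in> {2,3,4}" using assms(1) by auto
  moreover have "r \<le> 3" using assms \<open>h \<le> 4\<close> by simp
  then have "r \<in> {0,1,2,3}" using assms(3) by auto
  ultimately show ?thesis using assms(4) by (auto simp: power2_eq_square)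
qed

lemma chk163: fixes h r :: int assumes "2 \<le> h" "3*h^2 \<le> 163" "0 \<le> r" "r < h"
  shows "\<not> h dvd r^2 + r + 41"
proof -
  have "h \<le> 7" using bound_h[OF assms(1,2)] by simp
  then have "h \<in> {2,3,4,5,6,7}" using assms(1) by auto
  moreover have "r \<le> 6" using assms \<open>h \<le> 7\<close> by simp
  then have "r \<in> {0,1,2,3,4,5,6}" using assms(3) by auto
  ultimately show ?thesis using assms(4) by (auto simp: power2_eq_square)
qed

lemma enum_le: fixes v M :: int assumes "1 \<le> v" "v \<le> M" shows "v \<in> {1..M}"
  using assms by simp

theorem theorem7:
  fixes d :: int and A :: "complex set"
  assumes "d \<in> {-1, -2, -3, -7, -11, -19, -43, -67, -163}"
    and "ideal_in (OK d) A" and "A \<noteq> {0}"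
  shows "(\<exists>m\<in>OK d. m \<noteq> 0 \<and> PH (OK d) A = tau (OK d) m) \<and>
         (\<exists>n::int. n > 0 \<and>
            PH (OK d) (ideal_prod (OK d) A (cnj ` A)) = tau (OK d) (of_int n))"
proof -
  consider "d = -1 \<or> d = -2" | "d = -3" | "d = -7" | "d = -11" | "d = -19" | "d = -43" | "d = -67" | "d = -163"
    using assms(1) by auto
  then show ?thesis
  proof cases
    case 1 then show ?thesis using case2 assms(2,3) by blast
  next
    case 2
    have sqf: "\<And>v::int. v > 0 \<Longrightarrow> v^2 dvd d \<Longrightarrow> v = 1"
      by (rule sqf_gen[of d 1]) (auto simp: 2)
    show ?thesis by (rule case1[OF _ _ _ sqf assms(2,3)]) (auto simp: 2 dest!: sq4)
  next
    case 3
    have sqf: "\<And>v::int. v > 0 \<Longrightarrow> v^2 dvd d \<Longrightarrow> v = 1"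
    proof (rule sqf_gen[of d 2])
      fix v :: int assume "1 \<le> v" "v \<le> 2" "v^2 dvd d"
      then have "v \<in> {1,2}" by auto
      then show "v = 1" using \<open>v^2 dvd d\<close> 3 by auto
    qed (auto simp: 3)
    show ?thesis by (rule case1[OF _ _ _ sqf assms(2,3)]) (auto simp: 3 dest!: sq4)
  next
    case 4
    have sqf: "\<And>v::int. v > 0 \<Longrightarrow> v^2 dvd d \<Longrightarrow> v = 1"
    proof (rule sqf_gen[of d 3])
      fix v :: int assume "1 \<le> v" "v \<le> 3" "v^2 dvd d"
      then have "v \<in> {1,2,3}" by auto
      then show "v = 1" using \<open>v^2 dvd d\<close> 4 by auto
    qed (auto simp: 4)
    show ?thesis by (rule case1[OF _ _ _ sqf assms(2,3)]) (auto simp: 4 dest!: sq4)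
  next
    case 5
    have sqf: "\<And>v::int. v > 0 \<Longrightarrow> v^2 dvd d \<Longrightarrow> v = 1"
    proof (rule sqf_gen[of d 4])
      fix v :: int assume "1 \<le> v" "v \<le> 4" "v^2 dvd d"
      then have "v \<in> {1,2,3,4}" by auto
      then show "v = 1" using \<open>v^2 dvd d\<close> 5 by auto
    qed (auto simp: 5)
    show ?thesis by (rule case1[OF _ _ _ sqf assms(2,3)]) (auto simp: 5 dest: chk19)
  next
    case 6
    have sqf: "\<And>v::int. v > 0 \<Longrightarrow> v^2 dvd d \<Longrightarrow> v = 1"
    proof (rule sqf_gen[of d 6])
      fix v :: int assume "1 \<le> v" "v \<le> 6" "v^2 dvd d"
      then have "v \<in> {1,2,3,4,5,6}" by auto
      then show "v = 1" using \<open>v^2 dvd d\<close> 6 by auto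
    qed (auto simp: 6)
    show ?thesis by (rule case1[OF _ _ _ sqf assms(2,3)]) (auto simp: 6 dest: chk43)
  next
    case 7
    have sqf: "\<And>v::int. v > 0 \<Longrightarrow> v^2 dvd d \<Longrightarrow> v = 1"
    proof (rule sqf_gen[of d 8])
      fix v :: int assume "1 \<le> v" "v \<le> 8" "v^2 dvd d"
      then have "v \<in> {1,2,3,4,5,6,7,8}" by auto
      then show "v = 1" using \<open>v^2 dvd d\<close> 7 by auto
    qed (auto simp: 7)
    show ?thesis by (rule case1[OF _ _ _ sqf assms(2,3)]) (auto simp: 7 dest: chk67)
  next
    case 8
    have sqf: "\<And>v::int. v > 0 \<Longrightarrow> v^2 dvd d \<Longrightarrow> v = 1"
    proof (rule sqf_gen[of d 12])
      fix v :: int assume "1 \<le> v" "v \<le> 12" "v^2 dvd d"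
      have "v \<in> {1,2,3,4,5,6,7,8,9,10,11,12}"
        unfolding insert_iff empty_iff using \<open>1 \<le> v\<close> \<open>v \<le> 12\<close> by presburger
      then show "v = 1" using \<open>v^2 dvd d\<close> 8 by auto
    qed (auto simp: 8)
    show ?thesis by (rule case1[OF _ _ _ sqf assms(2,3)]) (auto simp: 8 dest: chk163)
  qed
qed

end
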